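(* Let $T^*_1,\dots,T^*_n$ be a sequence of releases of a dynamic dataset $T$ that is $m$-Distinct. Let $t$ be any record of $T$, with versions $t'_1,\dots,t'_I$ in these releases. Then in the feasible sub-SUG of $t$ built from these $I$ versions, every layer satisfies $|V'_i|\ge m$ for $i=1,\dots,I$.
   Context: Data model. A microdata table $T$ is published repeatedly as generalized tables $T^*_1,T^*_2,\dots$. Its records carry an identifier, quasi-identifier (QI) attributes and a sensitive attribute $S$ with a finite domain $\mathrm{dom}(S)$. Each published table partitions its records, possibly including counterfeit records, into QI-groups. If a record $t$ appears in a release, its candidate sensitive set in that release is the set of sensitive values occurring in its QI-group; this set contains $t$'s actual sensitive value. The versions of $t$ are its records in the successive releases in which it appears, listed in order: $t'_1,\dots,t'_I$, with candidate sensitive sets $C_1,\dots,C_I$. Internal updates are governed by a publicly known transition probability $P_{trans}(a,b)\ge 0$ for $a,b\in\mathrm{dom}(S)$. Sensitive attribute update graph (SUG). The SUG of $t$ has, for each $i=1,\dots,I$, a layer $V_i=\{v_{i,s}: s\in C_i\}$ with one node per value of $C_i$. There is a directed edge $(v_{i,s},v_{i+1,s'})$ exactly when $P_{trans}(s,s')>0$. Nodes and edges carry positive weights, which do not affect the feasible sub-SUG. Feasible sub-SUG. Obtain it from the SUG by repeatedly deleting a node, together with its incident edges, until no node can be deleted. A node is deleted if any of the following holds: it lies in $V_1$ and has no outgoing edge; it lies in $V_I$ and has no incoming edge; it lies in $V_i$ with $1<i<I$ and lacks an incoming edge or lacks an outgoing edge. When $I=1$, no node is deleted. Denote the remaining layers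 by $V'_i$. Definitions for $m$-Distinct. - For $a\in\mathrm{dom}(S)$, the candidate update set is $CUS(a)=\{b\in\mathrm{dom}(S): P_{trans}(a,b)>0\}$. - For a QI-group $g$ whose records have sensitive values $s_1,\dots,s_k$, its update set signature is the multiset $USS(g)=\{CUS(s_1),\dots,CUS(s_k)\}$. For a record version $t_i$, $USS(t_i)$ is the update set signature of the QI-group containing $t_i$. - A set of sensitive values $S'$ is a legal update instance of a multiset $U=\{U_1,\dots,U_k\}$ of subsets of $\mathrm{dom}(S)$ if all three of the following hold: $|S'|=k$; every $s\in S'$ lies in some $U_j$; every $U_j$ contains some $s\in S'$. - A published table is $m$-unique if every QI-group contains at least $m$ records, all with distinct sensitive values. The releases $T^*_1,\dots,T^*_n$ are $m$-Distinct if both of the following hold: 1. Each $T^*_i$ is $m$-unique. 2. Take any record $t$ and any two releases $T_i,T_j$ with $i<j$ that both contain $t$ and such that no release strictly between them contains $t$. Then the candidate sensitive set of $t_j$ is a legal update instance of $USS(t_i)$. *)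

theory Defs
  imports Complex_Main "HOL-Library.Multiset"
begin

text \<open>
A release (published generalized table) is a list of QI-groups; a QI-group is a
list of entries (owner, sensitive value). The owner is Some r for a genuine record with
identifier r and None for a counterfeit record. A sequence of releases T1..Tn is a list
of releases (0-based indices). The sensitive domain is a finite type 's; the transition
probability is P :: 's => 's => real.
\<close>

type_synonym ('r, 's) release = "('r option \<times> 's) list list"

definition well_formed_releases :: "('r, 's) release list \<Rightarrow> bool" where
  "well_formed_releases Ts \<longleftrightarrow>
     (\<forall>R \<in> set Ts. distinct (filter (\<lambda>x. x \<noteq> None) (map fst (concat R))))"

definition appears :: "('r, 's) release \<Rightarrow> 'r \<Rightarrow> bool" where
  "appears R t \<longleftrightarrow> (\<exists>g \<in> set R. Some t \<in> fst ` set g)"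

definition group_of :: "('r, 's) release \<Rightarrow> 'r \<Rightarrow> ('r option \<times> 's) list" where
  "group_of R t = (THE g. g \<in> set R \<and> Some t \<in> fst ` set g)"

definition cand :: "('r, 's) release \<Rightarrow> 'r \<Rightarrow> 's set" where
  "cand R t = snd ` set (group_of R t)"

definition CUS :: "('s \<Rightarrow> 's \<Rightarrow> real) \<Rightarrow> 's \<Rightarrow> 's set" where
  "CUS P a = {b. P a b > 0}"

definition USS :: "('s \<Rightarrow> 's \<Rightarrow> real) \<Rightarrow> ('r option \<times> 's) list \<Rightarrow> 's set multiset" where
  "USS P g = mset (map (\<lambda>e. CUS P (snd e)) g)"

definition legal_update_instance :: "'s set \<Rightarrow> 's set multiset \<Rightarrow> bool" where
  "legal_update_instance S' U \<longleftrightarrow>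
     finite S' \<and> card S' = size U \<and>
     (\<forall>s \<in> S'. \<exists>u \<in># U. s \<in> u) \<and> (\<forall>u \<in># U. \<exists>s \<in> S'. s \<in> u)"

definition m_unique :: "nat \<Rightarrow> ('r, 's) release \<Rightarrow> bool" where
  "m_unique m R \<longleftrightarrow> (\<forall>g \<in> set R. length g \<ge> m \<and> distinct (map snd g))"

definition m_distinct :: "('s \<Rightarrow> 's \<Rightarrow> real) \<Rightarrow> nat \<Rightarrow> ('r, 's) release list \<Rightarrow> bool" where
  "m_distinct P m Ts \<longleftrightarrow>
     (\<forall>R \<in> set Ts. m_unique m R) \<and>
     (\<forall>t i j. i < j \<and> j < length Ts \<and> appears (Ts ! i) t \<and> appears (Ts ! j) t \<and>
        (\<forall>k. i < k \<and> k < j \<longrightarrow> \<not> appears (Ts ! k) t) \<longrightarrow>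
        legal_update_instance (cand (Ts ! j) t) (USS P (group_of (Ts ! i) t)))"

text \<open>Versions of t: indices of the releases containing t, in order (length = I).\<close>
definition versions :: "('r, 's) release list \<Rightarrow> 'r \<Rightarrow> nat list" where
  "versions Ts t = filter (\<lambda>i. appears (Ts ! i) t) [0..<length Ts]"

text \<open>Candidate sensitive set C_k of the k-th version (0-based k).\<close>
definition cset :: "('r, 's) release list \<Rightarrow> 'r \<Rightarrow> nat \<Rightarrow> 's set" where
  "cset Ts t k = cand (Ts ! (versions Ts t ! k)) t"

text \<open>SUG nodes: node (k, s) is v_{k,s} of layer V_k. Edges (k,s) -> (k+1,s') iff P s s' > 0.\<close>
definition sug_nodes :: "('r, 's) release list \<Rightarrow> 'r \<Rightarrow> (nat \<times> 's) set" where
  "sug_nodes Ts t = {(k, s). k < length (versions Ts t) \<and> s \<in> cset Ts t k}"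

definition has_out :: "('s \<Rightarrow> 's \<Rightarrow> real) \<Rightarrow> (nat \<times> 's) set \<Rightarrow> nat \<times> 's \<Rightarrow> bool" where
  "has_out P X v \<longleftrightarrow> (\<exists>s'. (Suc (fst v), s') \<in> X \<and> P (snd v) s' > 0)"

definition has_in :: "('s \<Rightarrow> 's \<Rightarrow> real) \<Rightarrow> (nat \<times> 's) set \<Rightarrow> nat \<times> 's \<Rightarrow> bool" where
  "has_in P X v \<longleftrightarrow> (\<exists>s'. 0 < fst v \<and> (fst v - 1, s') \<in> X \<and> P s' (snd v) > 0)"

definition deletable :: "('s \<Rightarrow> 's \<Rightarrow> real) \<Rightarrow> nat \<Rightarrow> (nat \<times> 's) set \<Rightarrow> nat \<times> 's \<Rightarrow> bool" where
  "deletable P I X v \<longleftrightarrow> v \<in> X \<and> I \<ge> 2 \<and>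
     ((fst v = 0 \<and> \<not> has_out P X v) \<or>
      (fst v = I - 1 \<and> \<not> has_in P X v) \<or>
      (0 < fst v \<and> fst v < I - 1 \<and> (\<not> has_in P X v \<or> \<not> has_out P X v)))"

definition del_step :: "('s \<Rightarrow> 's \<Rightarrow> real) \<Rightarrow> nat \<Rightarrow> (nat \<times> 's) set \<Rightarrow> (nat \<times> 's) set \<Rightarrow> bool" where
  "del_step P I X Y \<longleftrightarrow> (\<exists>v. deletable P I X v \<and> Y = X - {v})"

definition feasible_sub_SUG :: "('s \<Rightarrow> 's \<Rightarrow> real) \<Rightarrow> ('r, 's) release list \<Rightarrow> 'r \<Rightarrow> (nat \<times> 's) set \<Rightarrow> bool" where
  "feasible_sub_SUG P Ts t X \<longleftrightarrow>
     (del_step P (length (versions Ts t)))\<^sup>*\<^sup>* (sug_nodes Ts t) X \<and>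
     \<not> (\<exists>v. deletable P (length (versions Ts t)) X v)"

definition layer :: "(nat \<times> 's) set \<Rightarrow> nat \<Rightarrow> 's set" where
  "layer X k = {s. (k, s) \<in> X}"

end

theory Submission
  imports Defs
begin

lemma grp_unique:
  assumes "distinct (filter (\<lambda>x. x \<noteq> None) (map fst (concat R)))"
    and "g1 \<in> set R" "g2 \<in> set R" "Some t \<in> fst ` set g1" "Some t \<in> fst ` set g2"
  shows "g1 = g2"
  using assms
proof (induction R)
  case Nil then show ?case by simp
next
  case (Cons g R)
  have d: "distinct (filter (\<lambda>x. x \<noteq> None) (map fst (concat R)))"
   and dj: "set (filter (\<lambda>x. x \<noteq> None) (map fst g)) \<inter> set (filter (\<lambda>x. x \<noteq> None) (map fst (concat R))) = {}"
    using Cons.prems(1) by auto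
  have inR: "Some t \<in> set (filter (\<lambda>x. x \<noteq> None) (map fst (concat R)))" if "h \<in> set R" "Some t \<in> fst ` set h" for h
    using that by force
  have ing: "Some t \<in> set (filter (\<lambda>x. x \<noteq> None) (map fst g))" if "Some t \<in> fst ` set g"
    using that by force
  show ?case
  proof (cases "g1 = g")
    case True
    show ?thesis
    proof (cases "g2 = g")
      case False
      then have "g2 \<in> set R" using Cons.prems by auto
      then show ?thesis using inR ing dj Cons.prems True by blast
    qed (simp add: True)
  next
    case False
    then have g1R: "g1 \<in> set R" using Cons.prems by auto
    show ?thesis
    proof (cases "g2 = g")
      case True
      then show ?thesis using inR[OF g1R] ing dj Cons.prems by blast
    next
      case False
      then have "g2 \<in> set R" using Cons.prems by auto
      then show ?thesis using Cons.IH[OF d g1R] Cons.prems by blast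
    qed
  qed
qed

lemma group_of_props:
  assumes "distinct (filter (\<lambda>x. x \<noteq> None) (map fst (concat R)))" "appears R t"
  shows "group_of R t \<in> set R \<and> Some t \<in> fst ` set (group_of R t)"
proof -
  obtain g where g: "g \<in> set R" "Some t \<in> fst ` set g" using assms(2) unfolding appears_def by blast
  have "group_of R t = g" unfolding group_of_def
    by (rule the_equality) (use g grp_unique[OF assms(1)] in blast)+
  then show ?thesis using g by simp
qed

lemma versions_props:
  assumes "k < length (versions Ts t)"
  shows "versions Ts t ! k < length Ts \<and> appears (Ts ! (versions Ts t ! k)) t"
proof -
  have "versions Ts t ! k \<in> set (versions Ts t)" using assms by simp
  then show ?thesis unfolding versions_def by auto
qed

lemma versions_consec:
  assumes "Suc k < length (versions Ts t)"
  shows "versions Ts t ! k < versions Ts t ! Suc k \<and>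
    (\<forall>l. versions Ts t ! k < l \<and> l < versions Ts t ! Suc k \<longrightarrow> \<not> appears (Ts ! l) t)"
proof -
  let ?v = "versions Ts t"
  have s: "sorted_wrt (<) ?v" unfolding versions_def
    by (rule sorted_wrt_filter) (simp add: sorted_wrt_upt)
  have lt: "?v ! a < ?v ! b" if "a < b" "b < length ?v" for a b
    using s that by (simp add: sorted_wrt_iff_nth_less)
  show ?thesis
  proof (intro conjI allI impI)
    show "?v ! k < ?v ! Suc k" using lt assms by simp
  next
    fix l assume l: "?v ! k < l \<and> l < ?v ! Suc k"
    show "\<not> appears (Ts ! l) t"
    proof
      assume a: "appears (Ts ! l) t"
      have "l < length Ts" using l versions_props[OF assms] by linarith
      then have "l \<in> set ?v" using a unfolding versions_def by simp
      then obtain q where q: "q < length ?v" "?v ! q = l" by (metis in_set_conv_nth)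
      have "\<not> q \<le> k"
      proof
        assume "q \<le> k"
        then have "?v ! q \<le> ?v ! k" using lt[of q k] assms by (cases "q = k") auto
        then show False using q l by simp
      qed
      moreover have "\<not> q \<ge> Suc k"
      proof
        assume "q \<ge> Suc k"
        then have "?v ! Suc k \<le> ?v ! q" using lt[of "Suc k" q] q by (cases "q = Suc k") auto
        then show False using q l by simp
      qed
      ultimately show False by simp
    qed
  qed
qed

theorem lemma3:
  fixes P :: "'s::finite \<Rightarrow> 's \<Rightarrow> real"
    and Ts :: "('r, 's) release list"
    and m :: nat and t :: 'r and X :: "(nat \<times> 's) set" and k :: nat
  assumes "\<forall>a b. P a b \<ge> 0"
    and "well_formed_releases Ts"
    and "m_distinct P m Ts"
    and "feasible_sub_SUG P Ts t X"
    and "k < length (versions Ts t)"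
  shows "card (layer X k) \<ge> m"
proof -
  let ?v = "versions Ts t"
  let ?I = "length ?v"
  let ?N = "sug_nodes Ts t"
  have md: "\<forall>R \<in> set Ts. m_unique m R" using assms(3) unfolding m_distinct_def by (rule conjunct1)
  have L: "\<forall>t i j. i < j \<and> j < length Ts \<and> appears (Ts ! i) t \<and> appears (Ts ! j) t \<and>
        (\<forall>k. i < k \<and> k < j \<longrightarrow> \<not> appears (Ts ! k) t) \<longrightarrow>
        legal_update_instance (cand (Ts ! j) t) (USS P (group_of (Ts ! i) t))"
    using assms(3) unfolding m_distinct_def by (rule conjunct2)
  have leg: "\<And>i j. i < j \<Longrightarrow> j < length Ts \<Longrightarrow> appears (Ts ! i) t \<Longrightarrow> appears (Ts ! j) t \<Longrightarrow>
        (\<forall>k. i < k \<and> k < j \<longrightarrow> \<not> appears (Ts ! k) t) \<Longrightarrow>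
        legal_update_instance (cand (Ts ! j) t) (USS P (group_of (Ts ! i) t))"
    by (rule L[rule_format]) (intro conjI; assumption)
  have gp: "group_of (Ts ! (?v ! q)) t \<in> set (Ts ! (?v ! q))" if "q < ?I" for q
  proof -
    note vp = versions_props[OF that]
    then have "Ts ! (?v ! q) \<in> set Ts" by simp
    then have dd: "distinct (filter (\<lambda>x. x \<noteq> None) (map fst (concat (Ts ! (?v ! q)))))"
      using assms(2) unfolding well_formed_releases_def by blast
    show ?thesis by (rule conjunct1[OF group_of_props[OF dd conjunct2[OF vp]]])
  qed
  have legk: "legal_update_instance (cset Ts t (Suc q)) (USS P (group_of (Ts ! (?v ! q)) t))"
    if "Suc q < ?I" for q
  proof -
    have a: "q < ?I" using that by simp
    note c = versions_consec[OF that] and p1 = versions_props[OF that] and p0 = versions_props[OF a]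
    show ?thesis unfolding cset_def
      by (rule leg) (use c p1 p0 in blast)+
  qed
  have out: "has_out P ?N (q, s)" if q1: "Suc q < ?I" and q2: "s \<in> cset Ts t q" for q s
  proof -
    have "CUS P s \<in># USS P (group_of (Ts ! (?v ! q)) t)"
      using q2 unfolding cset_def cand_def USS_def by auto
    then obtain s' where "s' \<in> cset Ts t (Suc q)" "s' \<in> CUS P s"
      using legk[OF q1] unfolding legal_update_instance_def by blast
    then show ?thesis unfolding has_out_def sug_nodes_def CUS_def using q1 q2 by auto
  qed
  have inn: "has_in P ?N (Suc q, s)" if q1: "Suc q < ?I" and q2: "s \<in> cset Ts t (Suc q)" for q s
  proof -
    obtain u where "u \<in># USS P (group_of (Ts ! (?v ! q)) t)" "s \<in> u"
      using legk[OF q1] q2 unfolding legal_update_instance_def by blast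
    then obtain s0 where "s0 \<in> cset Ts t q" "P s0 s > 0"
      unfolding cset_def cand_def USS_def CUS_def by auto
    then show ?thesis unfolding has_in_def sug_nodes_def using q1 q2 by auto
  qed
  have nodel: "\<not> deletable P ?I ?N w" for w
  proof
    assume d: "deletable P ?I ?N w"
    obtain q s where w: "w = (q, s)" by (cases w) blast
    have wN: "q < ?I" "s \<in> cset Ts t q" "?I \<ge> 2" using d w unfolding deletable_def sug_nodes_def by auto
    have o: "has_out P ?N w" if "q < ?I - 1" using out[of q s] that wN w by simp
    have i: "has_in P ?N w" if "0 < q"
    proof -
      have "\<exists>q'. q = Suc q'" using that gr0_implies_Suc by blast
      then obtain q' where "q = Suc q'" by blast
      then show ?thesis using inn[of q' s] wN w by simp
    qed
    show False using d w o i wN unfolding deletable_def by auto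
  qed
  have "X = ?N"
  proof -
    have "(del_step P ?I)\<^sup>*\<^sup>* ?N X" using assms(4) unfolding feasible_sub_SUG_def by blast
    then show ?thesis
      by (cases rule: converse_rtranclpE) (use nodel in \<open>auto simp: del_step_def\<close>)
  qed
  then have "layer X k = cset Ts t k" using assms(5) unfolding layer_def sug_nodes_def by auto
  moreover
  have "m_unique m (Ts ! (?v ! k))" using md versions_props[OF assms(5)] by simp
  then have "length (group_of (Ts ! (?v ! k)) t) \<ge> m \<and> distinct (map snd (group_of (Ts ! (?v ! k)) t))"
    using gp[OF assms(5)] unfolding m_unique_def by blast
  then have "card (cset Ts t k) \<ge> m" unfolding cset_def cand_def
    by (metis distinct_card length_map set_map)
  ultimately show ?thesis by simp
qed

end
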